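(* Let $A \in \mathbb{R}^{n\times n}$, $B\in\mathbb{R}^{n\times m}$, $C\in\mathbb{R}^{p\times n}$, and consider the deterministic linear system $x_{k+1}=Ax_k+Bu_k$, $y_k=Cx_k$, with constant reference $r_k = r_{ss}\in\mathbb{R}^p$. Let $Q\in\mathbb{R}^{p\times p}$ and $R\in\mathbb{R}^{m\times m}$ be positive definite. Assume that the pair $(A,\sqrt{Q}\,C)$ is observable and the pair $(A,B)$ is controllable. Let $(x_{ss},u_{ss})$ be a steady-state pair satisfying $$\begin{bmatrix} A-I & B\\ C & \mathbf{0}\end{bmatrix}\begin{bmatrix} x_{ss}\\ u_{ss}\end{bmatrix}=\begin{bmatrix}\mathbf{0}\\ r_{ss}\end{bmatrix},$$ and define the deviation variables $\tilde x_k=x_k-x_{ss}$, $\tilde u_k=u_k-u_{ss}$ (so that $\tilde x_{k+1}=A\tilde x_k+B\tilde u_k$). Define the stage cost $C(x_k,u_k)=x_k^\top C^\top Q C x_k+u_k^\top R u_k$, the steady-state cost $C_{ss}=x_{ss}^\top C^\top QC x_{ss}+u_{ss}^\top R u_{ss}$, and the cost index $$J(\tilde x_0)=\sum_{k=0}^\infty \left|C(x_k,u_k)-C_{ss}\right|.$$ Then there exists a value function $V(\tilde x_k)$ (namely the optimal cost $V(\tilde x_0)=\inf_{\{\tilde u_k\}} J(\tilde x_0)$, which is finite for all $\tilde x_0$) that satisfies the Bellman equation $$V(\tilde x_k)=\min_{\{u_k\}_{k=0}^\infty}\left\{\left|C(x_k,u_k)-C_{ss}\right|+V(\tilde x_{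k+1})\right\}.$$
   Context: This is an average-reward/cost formulation of optimal tracking control: the term $C_{ss}$ plays the role of the average cost, subtracted from the stage cost so that the infinite-horizon sum can be finite even though $u_k$ converges to a nonzero steady-state value $u_{ss}$. $I$ and $\mathbf{0}$ denote identity and zero matrices of appropriate dimensions. *)

theory Defs
  imports "HOL-Analysis.Analysis"
begin

text \<open>Symmetric positive definite matrix.\<close>
definition pos_def_mat :: "real^'n^'n \<Rightarrow> bool" where
  "pos_def_mat M \<longleftrightarrow> transpose M = M \<and> (\<forall>x. x \<noteq> 0 \<longrightarrow> x \<bullet> (M *v x) > 0)"

text \<open>Symmetric positive semidefinite matrix.\<close>
definition pos_semidef_mat :: "real^'n^'n \<Rightarrow> bool" where
  "pos_semidef_mat M \<longleftrightarrow> transpose M = M \<and> (\<forall>x. x \<bullet> (M *v x) \<ge> 0)"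

text \<open>The (principal) matrix square root: the unique symmetric PSD S with S S = M.\<close>
definition msqrt :: "real^'n^'n \<Rightarrow> real^'n^'n" where
  "msqrt M = (THE S. pos_semidef_mat S \<and> S ** S = M)"

text \<open>State trajectory of x(k+1) = A x(k) + B u(k).\<close>
fun traj :: "real^'n^'n \<Rightarrow> real^'m^'n \<Rightarrow> real^'n \<Rightarrow> (nat \<Rightarrow> real^'m) \<Rightarrow> nat \<Rightarrow> real^'n" where
  "traj A B x0 u 0 = x0"
| "traj A B x0 u (Suc k) = A *v traj A B x0 u k + B *v u k"

text \<open>Controllability: every state can be steered to every state in finitely many steps.\<close>
definition controllable :: "real^'n^'n \<Rightarrow> real^'m^'n \<Rightarrow> bool" where
  "controllable A B \<longleftrightarrow> (\<forall>x0 x1. \<exists>u N. traj A B x0 u N = x1)"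

text \<open>Observability of (A, C): the initial state is determined by the output
  sequence y_k = C A^k x_0 of the autonomous system.\<close>
definition observable :: "real^'n^'n \<Rightarrow> real^'n^'p \<Rightarrow> bool" where
  "observable A C \<longleftrightarrow>
     (\<forall>x0 x0'. (\<forall>k. C *v (((*v) A ^^ k) x0) = C *v (((*v) A ^^ k) x0')) \<longrightarrow> x0 = x0')"

text \<open>Stage cost C(x,u) = x' C' Q C x + u' R u.\<close>
definition stage_cost :: "real^'n^'p \<Rightarrow> real^'p^'p \<Rightarrow> real^'m^'m \<Rightarrow> real^'n \<Rightarrow> real^'m \<Rightarrow> real" where
  "stage_cost C Q R x u = (C *v x) \<bullet> (Q *v (C *v x)) + u \<bullet> (R *v u)"

text \<open>Cost index J(x~0) for deviation input sequence u~, as an extended nonnegative real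
  (the series of nonnegative terms may diverge).\<close>
definition cost_index ::
  "real^'n^'n \<Rightarrow> real^'m^'n \<Rightarrow> real^'n^'p \<Rightarrow> real^'p^'p \<Rightarrow> real^'m^'m \<Rightarrow> real^'n \<Rightarrow> real^'m
    \<Rightarrow> real^'n \<Rightarrow> (nat \<Rightarrow> real^'m) \<Rightarrow> ennreal" where
  "cost_index A B C Q R xss uss xt0 ut =
     (\<Sum>k. ennreal \<bar>stage_cost C Q R (traj A B xt0 ut k + xss) (ut k + uss)
                     - stage_cost C Q R xss uss\<bar>)"

text \<open>Optimal cost V(x~0) = inf over deviation input sequences of J(x~0).\<close>
definition value_fun ::
  "real^'n^'n \<Rightarrow> real^'m^'n \<Rightarrow> real^'n^'p \<Rightarrow> real^'p^'p \<Rightarrow> real^'m^'m \<Rightarrow> real^'n \<Rightarrow> real^'m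
    \<Rightarrow> real^'n \<Rightarrow> ennreal" where
  "value_fun A B C Q R xss uss xt0 = (INF ut. cost_index A B C Q R xss uss xt0 ut)"

end

theory Submission imports Defs "HOL-Library.Diagonal_Subsequence" begin

lemma tendsto_mv[tendsto_intros]: "(f \<longlongrightarrow> l) F \<Longrightarrow> ((\<lambda>j. (A::real^'n^'m) *v f j) \<longlongrightarrow> A *v l) F"
proof -
  assume f: "(f \<longlongrightarrow> l) F"
  have "continuous_on UNIV (\<lambda>x. A *v x)" by (intro continuous_intros)
  hence "isCont (\<lambda>x. A *v x) l" by (simp add: continuous_on_eq_continuous_at)
  thus ?thesis using isCont_tendsto_compose f by blast
qed

lemma ennreal_add_INF: "(c::ennreal) + (INF i. f i) = (INF i. c + f i)"
  using continuous_at_Inf_mono[of "\<lambda>x. c + x" "range f"]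
  using continuous_add[of "at_right (Inf (range f))" "\<lambda>x. c" "\<lambda>x. x"]
  by (auto simp: mono_def image_comp)

lemma diag_conv:
  fixes f :: "nat \<Rightarrow> nat \<Rightarrow> real^'m"
  assumes bdd: "\<And>j k. norm (f j k) \<le> K"
  shows "\<exists>d. strict_mono d \<and> (\<forall>k. convergent (\<lambda>j. f (d j) k))"
proof -
  let ?P = "\<lambda>n s. convergent (\<lambda>k. f (s k) n)"
  interpret nat: subseqs ?P
  proof (unfold convergent_def, unfold subseqs_def, auto)
    fix n :: nat and s :: "nat \<Rightarrow> nat" assume s: "strict_mono s"
    have "\<And>k. f (s k) n \<in> cball 0 K"
      using bdd by simp
    hence "\<exists>l s'. strict_mono s' \<and> ((\<lambda>k. f (s k) n) \<circ> s') \<longlonglongrightarrow> l"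
      using compact_cball compact_imp_seq_compact seq_compactE by metis
    thus "\<exists>s'. strict_mono (s'::nat\<Rightarrow>nat) \<and> (\<exists>l. (\<lambda>k. f (s (s' k)) n) \<longlonglongrightarrow> l)"
      by (auto simp: comp_def)
  qed
  define d where "d = nat.diagseq"
  have subseq: "strict_mono d"
    unfolding d_def using nat.subseq_diagseq by auto
  have "?P n d" for n
  proof -
    have Pn_seqseq: "?P n (nat.seqseq (Suc n))"
      by (rule nat.seqseq_holds)
    have 1: "(\<lambda>k. f ((nat.seqseq (Suc n) \<circ> (\<lambda>k. nat.fold_reduce (Suc n) k
      (Suc n + k))) k) n) = (\<lambda>k. f (nat.seqseq (Suc n) k) n) \<circ>
      (\<lambda>k. nat.fold_reduce (Suc n) k (Suc n + k))"
      by auto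
    have 2: "?P n (d \<circ> ((+) (Suc n)))"
      unfolding d_def nat.diagseq_seqseq 1
      by (intro convergent_subseq_convergent Pn_seqseq nat.subseq_diagonal_rest)
    then obtain L where 3: "(\<lambda>na. f (d (na + Suc n)) n) \<longlonglongrightarrow> L"
      by (auto simp: add.commute dest: convergentD)
    then have "(\<lambda>k. f (d k) n) \<longlonglongrightarrow> L"
      by (rule LIMSEQ_offset)
    then show ?thesis
      by (auto simp: convergent_def)
  qed
  thus ?thesis using subseq by blast
qed

lemma posdef_nonneg: "pos_def_mat Q \<Longrightarrow> 0 \<le> y \<bullet> (Q *v y)"
  unfolding pos_def_mat_def by (cases "y = 0") (auto intro: less_imp_le)

lemma posdef_coercive:
  fixes R :: "real^'m^'m"
  assumes "pos_def_mat R"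
  shows "\<exists>l>0. \<forall>w. l * (norm w)^2 \<le> w \<bullet> (R *v w)"
proof -
  have "continuous_on (sphere 0 1) (\<lambda>w. w \<bullet> (R *v w))" by (intro continuous_intros)
  moreover have "sphere (0::real^'m) 1 \<noteq> {}" by simp
  ultimately obtain w0 where w0: "w0 \<in> sphere 0 1" "\<forall>y\<in>sphere 0 1. w0 \<bullet> (R *v w0) \<le> y \<bullet> (R *v y)"
    using continuous_attains_inf[OF compact_sphere] by blast
  have w0ne: "w0 \<noteq> 0" using w0(1) by auto
  define l where "l = w0 \<bullet> (R *v w0)"
  have lpos: "l > 0" using assms w0ne unfolding pos_def_mat_def l_def by blast
  have "l * (norm w)^2 \<le> w \<bullet> (R *v w)" for w
  proof (cases "w = 0")
    case True then show ?thesis by simp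
  next
    case False
    define y where "y = (1 / norm w) *\<^sub>R w"
    have "y \<in> sphere 0 1" using False by (simp add: y_def)
    hence "l \<le> y \<bullet> (R *v y)" using w0 l_def by blast
    also have "y \<bullet> (R *v y) = (1 / norm w)^2 * (w \<bullet> (R *v w))"
      by (simp add: y_def matrix_vector_mult_scaleR power2_eq_square)
    finally have "l * (norm w)^2 \<le> (1 / norm w)^2 * (w \<bullet> (R *v w)) * (norm w)^2"
      by (simp add: mult_right_mono)
    also have "\<dots> = w \<bullet> (R *v w)" using False by (simp add: field_simps)
    finally show ?thesis .
  qed
  thus ?thesis using lpos by blast
qed

lemma traj_shift: "traj A B x (case_nat u0 ut) (Suc k) = traj A B (A *v x + B *v u0) ut k"
  by (induction k) auto

lemma traj_tendsto:
  assumes "\<And>k. (\<lambda>j. v j k) \<longlonglongrightarrow> u k"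
  shows "(\<lambda>j. traj A B x (v j) k) \<longlonglongrightarrow> traj A B x u k"
  by (induction k) (auto intro!: tendsto_intros assms)


theorem lemma1:
  fixes A :: "real^'n^'n" and B :: "real^'m^'n" and C :: "real^'n^'p"
    and Q :: "real^'p^'p" and R :: "real^'m^'m"
    and rss :: "real^'p" and xss :: "real^'n" and uss :: "real^'m"
  assumes "pos_def_mat Q" and "pos_def_mat R"
    and "observable A (msqrt Q ** C)"
    and "controllable A B"
    and "(A - mat 1) *v xss + B *v uss = 0"
    and "C *v xss = rss"
  shows "(\<forall>xt. value_fun A B C Q R xss uss xt < top) \<and>
         (\<forall>xt.
            (\<forall>ut. value_fun A B C Q R xss uss xt
                   \<le> ennreal \<bar>stage_cost C Q R (xt + xss) (ut + uss) - stage_cost C Q R xss uss\<bar>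
                     + value_fun A B C Q R xss uss (A *v xt + B *v ut)) \<and>
            (\<exists>ut. value_fun A B C Q R xss uss xt
                   = ennreal \<bar>stage_cost C Q R (xt + xss) (ut + uss) - stage_cost C Q R xss uss\<bar>
                     + value_fun A B C Q R xss uss (A *v xt + B *v ut)))"
proof -
  define Css where "Css = stage_cost C Q R xss uss"
  define d where "d x u = \<bar>stage_cost C Q R (x + xss) (u + uss) - Css\<bar>" for x u
  define J where "J x ut = cost_index A B C Q R xss uss x ut" for x ut
  define V where "V x = value_fun A B C Q R xss uss x" for x
  have Jdef: "J x ut = (\<Sum>k. ennreal (d (traj A B x ut k) (ut k)))" for x ut
    unfolding J_def cost_index_def d_def Css_def ..
  have Vdef: "V x = (INF ut. J x ut)" for x unfolding V_def J_def value_fun_def ..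
  have dnn: "0 \<le> d x u" for x u unfolding d_def by simp
  have d00: "d 0 0 = 0" unfolding d_def Css_def by simp
  have split: "J x (case_nat u0 ut) = ennreal (d x u0) + J (A *v x + B *v u0) ut" for x u0 ut
  proof -
    have "J x (case_nat u0 ut) = (\<Sum>j. ennreal (d (traj A B x (case_nat u0 ut) (j+1)) (case_nat u0 ut (j+1))))
        + (\<Sum>j<1. ennreal (d (traj A B x (case_nat u0 ut) j) (case_nat u0 ut j)))"
      unfolding Jdef by (rule suminf_offset) (rule summableI)
    also have "\<dots> = J (A *v x + B *v u0) ut + ennreal (d x u0)"
      unfolding Jdef by (simp only: Suc_eq_plus1[symmetric] traj_shift) simp
    finally show ?thesis by (simp add: add.commute)
  qed
  have le: "V x \<le> ennreal (d x u0) + V (A *v x + B *v u0)" for x u0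
  proof -
    have "V x \<le> (INF ut. ennreal (d x u0) + J (A *v x + B *v u0) ut)"
      unfolding Vdef
    proof (rule INF_greatest)
      fix ut show "(INF ut. J x ut) \<le> ennreal (d x u0) + J (A *v x + B *v u0) ut"
        using INF_lower[of "case_nat u0 ut" UNIV "J x"] split by simp
    qed
    thus ?thesis unfolding Vdef[of "A *v x + B *v u0"] ennreal_add_INF .
  qed
  have fin: "V xt < top" for xt
  proof -
    obtain u N where uN: "traj A B xt u N = 0" using assms(4) unfolding controllable_def by blast
    define u' where "u' k = (if k < N then u k else 0)" for k
    have eq: "k \<le> N \<Longrightarrow> traj A B xt u' k = traj A B xt u k" for k
      by (induction k) (auto simp: u'_def)
    have z: "traj A B xt u' (N + i) = 0" for i
      by (induction i) (use eq uN in simp, simp add: u'_def)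
    have "J xt u' = (\<Sum>k\<in>{..<N}. ennreal (d (traj A B xt u' k) (u' k)))"
      unfolding Jdef
    proof (rule suminf_finite)
      fix k assume "k \<notin> {..<N}"
      then obtain i where "k = N + i" by (metis lessThan_iff le_add_diff_inverse not_less)
      thus "ennreal (d (traj A B xt u' k) (u' k)) = 0" using z d00 by (simp add: u'_def)
    qed simp
    also have "\<dots> = ennreal (\<Sum>k\<in>{..<N}. d (traj A B xt u' k) (u' k))"
      using dnn by simp
    finally have "J xt u' < top" by simp
    moreover have "V xt \<le> J xt u'" unfolding Vdef by (rule INF_lower) simp
    ultimately show ?thesis by simp
  qed

  have opt: "\<exists>us. J xt us = V xt" for xt
  proof -
    define M where "M = V xt"
    have Mfin: "M < top" using fin M_def by simp
    define m where "m = enn2real M"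
    have Mm: "M = ennreal m" using Mfin unfolding m_def by (cases M) auto
    have m0: "0 \<le> m" unfolding m_def by simp
    define eps where "eps j = inverse (real (Suc j))" for j
    have epspos: "0 < eps j" for j unfolding eps_def by simp
    have "\<exists>ut. J xt ut < ennreal (m + eps j)" for j
    proof -
      have "M < ennreal (m + eps j)" using Mm m0 epspos[of j] by (simp add: ennreal_lessI)
      hence "(INF ut. J xt ut) < ennreal (m + eps j)" using M_def Vdef by simp
      thus ?thesis by (simp add: INF_less_iff)
    qed
    then obtain v where v: "\<And>j. J xt (v j) < ennreal (m + eps j)" by metis
    have eps1: "eps j \<le> 1" for j unfolding eps_def by (simp add: field_simps)
    have partial: "(\<Sum>k<n. d (traj A B xt (v j) k) (v j k)) \<le> m + eps j" for j n
    proof -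
      have "ennreal (\<Sum>k<n. d (traj A B xt (v j) k) (v j k)) = (\<Sum>k<n. ennreal (d (traj A B xt (v j) k) (v j k)))"
        using dnn by simp
      also have "\<dots> \<le> J xt (v j)" unfolding Jdef by (intro sum_le_suminf summableI) auto
      also have "\<dots> \<le> ennreal (m + eps j)" using v[of j] by simp
      finally have "ennreal (\<Sum>k<n. d (traj A B xt (v j) k) (v j k)) \<le> ennreal (m + eps j)" .
      thus ?thesis using m0 epspos[of j] by (metis ennreal_le_iff add_nonneg_nonneg less_imp_le)
    qed
    obtain l where l: "l > 0" "\<And>w. l * (norm w)^2 \<le> w \<bullet> (R *v w)"
      using posdef_coercive[OF assms(2)] by blast
    define K0 where "K0 = sqrt ((m + 1 + Css) / l)"
    have bnd: "norm (v j k) \<le> K0 + norm uss" for j k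
    proof -
      have s: "(\<Sum>i<Suc k. d (traj A B xt (v j) i) (v j i)) \<le> m + eps j" by (rule partial)
      have "0 \<le> (\<Sum>i<k. d (traj A B xt (v j) i) (v j i))" by (intro sum_nonneg dnn)
      hence "d (traj A B xt (v j) k) (v j k) \<le> m + eps j" using s by simp
      hence "d (traj A B xt (v j) k) (v j k) \<le> m + 1" using eps1[of j] by simp
      define w where "w = v j k + uss"
      define y where "y = C *v (traj A B xt (v j) k + xss)"
      have "y \<bullet> (Q *v y) + w \<bullet> (R *v w) - Css \<le> m + 1"
        using \<open>d _ _ \<le> m + 1\<close> unfolding d_def stage_cost_def w_def y_def by simp
      moreover have "0 \<le> y \<bullet> (Q *v y)" by (rule posdef_nonneg[OF assms(1)])
      ultimately have "l * (norm w)^2 \<le> m + 1 + Css" using l(2)[of w] by simp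
      hence "(norm w)^2 \<le> (m + 1 + Css) / l" using l(1) by (simp add: field_simps)
      hence "norm w \<le> K0" unfolding K0_def by (simp add: real_le_rsqrt)
      moreover have "norm (v j k) \<le> norm w + norm uss"
        unfolding w_def using norm_triangle_ineq4[of "v j k + uss" uss] by simp
      ultimately show ?thesis by simp
    qed
    obtain dd where dd: "strict_mono dd" "\<And>k. convergent (\<lambda>j. v (dd j) k)"
      using diag_conv[of v, OF bnd] by blast
    define us where "us k = lim (\<lambda>j. v (dd j) k)" for k
    have conv: "(\<lambda>j. v (dd j) k) \<longlonglongrightarrow> us k" for k
      using dd(2) unfolding us_def by (simp add: convergent_LIMSEQ_iff)
    have tconv: "(\<lambda>j. traj A B xt (v (dd j)) k) \<longlonglongrightarrow> traj A B xt us k" for k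
      by (rule traj_tendsto) (rule conv)
    have psconv: "(\<lambda>j. \<Sum>k<n. d (traj A B xt (v (dd j)) k) (v (dd j) k))
        \<longlonglongrightarrow> (\<Sum>k<n. d (traj A B xt us k) (us k))" for n
      unfolding d_def stage_cost_def by (intro tendsto_intros tconv conv)
    have epsconv: "(\<lambda>j. m + eps j) \<longlonglongrightarrow> m"
      unfolding eps_def using tendsto_add[OF tendsto_const LIMSEQ_inverse_real_of_nat, of m] by simp
    have epsle: "eps (dd j) \<le> eps j" for j
      unfolding eps_def using seq_suble[OF dd(1), of j] by (simp add: field_simps)
    have psle: "(\<Sum>k<n. d (traj A B xt us k) (us k)) \<le> m" for n
    proof (rule LIMSEQ_le[OF psconv epsconv])
      show "\<exists>N. \<forall>j\<ge>N. (\<Sum>k<n. d (traj A B xt (v (dd j)) k) (v (dd j) k)) \<le> m + eps j"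
        using partial epsle by (meson add_left_mono order_trans)
    qed
    have "J xt us \<le> M"
      unfolding Jdef Mm
    proof (rule suminf_le_const)
      show "summable (\<lambda>k. ennreal (d (traj A B xt us k) (us k)))" by (rule summableI)
      fix n
      show "(\<Sum>k<n. ennreal (d (traj A B xt us k) (us k))) \<le> ennreal m"
        using psle[of n] dnn by (simp add: ennreal_leI)
    qed
    moreover have "M \<le> J xt us" unfolding M_def Vdef by (rule INF_lower) simp
    ultimately show ?thesis unfolding M_def by (intro exI[of _ us]) simp
  qed
  have ex: "\<exists>u0. V xt = ennreal (d xt u0) + V (A *v xt + B *v u0)" for xt
  proof -
    obtain us where us: "J xt us = V xt" using opt by blast
    have cn: "case_nat (us 0) (\<lambda>k. us (Suc k)) = us" by (rule ext) (simp split: nat.split)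
    have "V xt = ennreal (d xt (us 0)) + J (A *v xt + B *v us 0) (\<lambda>k. us (Suc k))"
      using split[of xt "us 0" "\<lambda>k. us (Suc k)"] us cn by simp
    also have "\<dots> \<ge> ennreal (d xt (us 0)) + V (A *v xt + B *v us 0)"
      unfolding Vdef[of "A *v xt + B *v us 0"] by (intro add_left_mono INF_lower) simp
    finally show ?thesis using le[of xt "us 0"] by (intro exI[of _ "us 0"]) simp
  qed
  show ?thesis using fin le ex unfolding V_def d_def Css_def by blast
qed

end
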